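(* Let $\operatorname{R}_3=\{a_0,a_1,a_2\}$ be the dihedral quandle of order $3$, with $a_ia_j=a_{2j-i \pmod 3}$. Then the set of non-zero maximal quandles in $\mathbb{Z}_2[\operatorname{R}_3]$ is $$\operatorname{mq}(\mathbb{Z}_2[\operatorname{R}_3])=\Big\{\{a_0+a_1+a_2\},~\operatorname{R}_3,~\{a_0+a_1,\,a_0+a_2,\,a_1+a_2\}\Big\},$$ and the quandle $\{a_0+a_1,\,a_0+a_2,\,a_1+a_2\}$ is isomorphic to $\operatorname{R}_3$.
   Context: A quandle is a non-empty set with a binary operation $(u,v)\mapsto uv$ such that $uu=u$; for all $u,v$ there is a unique $w$ with $u=wv$; and $(uv)w=(uw)(vw)$. For a quandle $Q$, the quandle ring $\mathbb{Z}_2[Q]$ is the $\mathbb{Z}_2$-vector space with basis $Q$, with multiplication $\big(\sum_i\alpha_i q_i\big)\big(\sum_j\beta_j q_j\big)=\sum_{i,j}\alpha_i\beta_j (q_iq_j)$. A quandle in $\mathbb{Z}_2[Q]$ is a subset closed under the ring multiplication which is a quandle under the restricted multiplication. $\operatorname{mq}(\mathbb{Z}_2[Q])$ is the set of all quandles in $\mathbb{Z}_2[Q]$ different from $\{0\}$ that are maximal with respect to inclusion among quandles in $\mathbb{Z}_2[Q]$. *)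

theory Defs
  imports Main
begin

definition is_quandle :: "'a set \<Rightarrow> ('a \<Rightarrow> 'a \<Rightarrow> 'a) \<Rightarrow> bool" where
  "is_quandle Q m \<longleftrightarrow> Q \<noteq> {}
     \<and> (\<forall>u\<in>Q. \<forall>v\<in>Q. m u v \<in> Q)
     \<and> (\<forall>u\<in>Q. m u u = u)
     \<and> (\<forall>u\<in>Q. \<forall>v\<in>Q. \<exists>!w. w \<in> Q \<and> u = m w v)
     \<and> (\<forall>u\<in>Q. \<forall>v\<in>Q. \<forall>w\<in>Q. m (m u v) w = m (m u w) (m v w))"

definition quandle_iso :: "'a set \<Rightarrow> ('a \<Rightarrow> 'a \<Rightarrow> 'a) \<Rightarrow> 'b set \<Rightarrow> ('b \<Rightarrow> 'b \<Rightarrow> 'b) \<Rightarrow> bool" where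
  "quandle_iso Q m P n \<longleftrightarrow>
     (\<exists>f. bij_betw f Q P \<and> (\<forall>u\<in>Q. \<forall>v\<in>Q. f (m u v) = n (f u) (f v)))"

text \<open>The quandle ring Z_2[Q]: an element is identified with its support, i.e. the finite
  set of basis elements q in Q with coefficient 1 (coefficients in Z_2). The zero element is
  the empty set; addition is symmetric difference.\<close>
definition qring :: "'a set \<Rightarrow> 'a set set" where
  "qring Q = {x. x \<subseteq> Q \<and> finite x}"

definition qmul :: "('a \<Rightarrow> 'a \<Rightarrow> 'a) \<Rightarrow> 'a set \<Rightarrow> 'a set \<Rightarrow> 'a set" where
  "qmul m x y = {q. odd (card {(u, v). u \<in> x \<and> v \<in> y \<and> m u v = q})}"

definition quandle_in :: "'a set \<Rightarrow> ('a \<Rightarrow> 'a \<Rightarrow> 'a) \<Rightarrow> 'a set set \<Rightarrow> bool" where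
  "quandle_in Q m X \<longleftrightarrow> X \<subseteq> qring Q \<and> is_quandle X (qmul m)"

definition mq :: "'a set \<Rightarrow> ('a \<Rightarrow> 'a \<Rightarrow> 'a) \<Rightarrow> 'a set set set" where
  "mq Q m = {X. quandle_in Q m X \<and> X \<noteq> {{}}
              \<and> (\<forall>Y. quandle_in Q m Y \<and> X \<subseteq> Y \<longrightarrow> Y = X)}"

text \<open>Dihedral quandle R_3 with a_i = i, carrier {0,1,2}, a_i a_j = a_{(2j - i) mod 3}.\<close>
definition R3 :: "nat set" where "R3 = {0, 1, 2}"

definition r3op :: "nat \<Rightarrow> nat \<Rightarrow> nat" where
  "r3op i j = nat ((2 * int j - int i) mod 3)"

end

theory Submission
  imports Defs
begin
lemma qmul_list: "distinct xs \<Longrightarrow> distinct ys \<Longrightarrow> qmul m (set xs) (set ys) = {q. odd (length (filter (\<lambda>p. m (fst p) (snd p) = q) (List.product xs ys)))}"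
proof -
  assume d: "distinct xs" "distinct ys"
  have e: "{(u, v). u \<in> set xs \<and> v \<in> set ys \<and> m u v = q} = set (filter (\<lambda>p. m (fst p) (snd p) = q) (List.product xs ys))" for q
    by (simp add: set_eq_iff)
  have "distinct (filter (\<lambda>p. m (fst p) (snd p) = q) (List.product xs ys))" for q
    using d by (simp add: distinct_product)
  then have "card {(u, v). u \<in> set xs \<and> v \<in> set ys \<and> m u v = q} = length (filter (\<lambda>p. m (fst p) (snd p) = q) (List.product xs ys))" for q
    unfolding e by (rule distinct_card)
  then show ?thesis unfolding qmul_def by simp
qed
lemma r3op_lt: "r3op u v < 3" unfolding r3op_def by (simp add: nat_less_iff)
lemma qmul_list3: "distinct xs \<Longrightarrow> distinct ys \<Longrightarrow> qmul r3op (set xs) (set ys) = {q \<in> {0,1,2}. odd (length (filter (\<lambda>p. r3op (fst p) (snd p) = q) (List.product xs ys)))}"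
proof -
  assume d: "distinct xs" "distinct ys"
  have z: "filter (\<lambda>p. r3op (fst p) (snd p) = q) (List.product xs ys) = []" if "q \<notin> {0,1,2}" for q
  proof -
    have "q \<ge> 3" using that by auto
    then have "\<And>p. r3op (fst p) (snd p) \<noteq> q" using r3op_lt less_le_trans by blast
    then show ?thesis by (simp add: filter_empty_conv)
  qed
  show ?thesis unfolding qmul_list[OF d, of r3op]
  proof (rule set_eqI)
    fix q
    show "q \<in> {q. odd (length (filter (\<lambda>p. r3op (fst p) (snd p) = q) (List.product xs ys)))} \<longleftrightarrow>
       q \<in> {q \<in> {0,1,2}. odd (length (filter (\<lambda>p. r3op (fst p) (snd p) = q) (List.product xs ys)))}"
    proof (cases "q \<in> {0,1,2}")
      case True then show ?thesis by simp
    next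
      case False then show ?thesis using z[OF False] by simp
    qed
  qed
qed
definition sel :: "(nat \<Rightarrow> bool) \<Rightarrow> nat set \<Rightarrow> nat set" where "sel P A = {q \<in> A. P q}"
definition cnt :: "nat list \<Rightarrow> nat list \<Rightarrow> nat \<Rightarrow> nat" where "cnt xs ys q = length (filter (\<lambda>p. r3op (fst p) (snd p) = q) (List.product xs ys))"
lemma sel_ins: "sel P (insert a A) = (if P a then insert a (sel P A) else sel P A)" by (auto simp: sel_def)
lemma sel_empty: "sel P {} = {}" by (auto simp: sel_def)
lemma qmul_sel: "distinct xs \<Longrightarrow> distinct ys \<Longrightarrow> qmul r3op (set xs) (set ys) = sel (\<lambda>q. odd (cnt xs ys q)) {0,1,2}"
  unfolding sel_def cnt_def by (rule qmul_list3)
lemma r3[simp]: "r3op 0 0 = 0" "r3op 0 1 = 2" "r3op 0 2 = 1" "r3op 1 0 = 2" "r3op 1 1 = 1" "r3op 1 2 = 0"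
 "r3op 2 0 = 1" "r3op 2 1 = 0" "r3op 2 2 = 2"
 "r3op 0 (Suc 0) = 2" "r3op (Suc 0) 0 = 2" "r3op (Suc 0) (Suc 0) = 1" "r3op (Suc 0) 2 = 0" "r3op 2 (Suc 0) = 0" by (simp_all add: r3op_def)
lemma sub3: "(x::nat set) \<subseteq> {0,1,2} \<Longrightarrow> x = {} \<or> x = {0} \<or> x = {1} \<or> x = {2} \<or> x = {0,1} \<or> x = {0,2} \<or> x = {1,2} \<or> x = {0,1,2}"
proof -
  assume a: "x \<subseteq> {0,1,2}"
  have "x = (if 0 \<in> x then {0} else {}) \<union> (if 1 \<in> x then {1} else {}) \<union> (if 2 \<in> x then {2} else {})"
    using a by auto
  then show ?thesis by (auto split: if_splits)
qed

lemma tbl1: "qmul r3op {} {} = {}"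
proof -
  have "qmul r3op (set []) (set []) = sel (\<lambda>q. odd (cnt [] [] q)) {0,1,2}" by (rule qmul_sel) simp_all
  then show ?thesis by (simp add: sel_ins sel_empty cnt_def)
qed
lemma tbl2: "qmul r3op {} {0} = {}"
proof -
  have "qmul r3op (set []) (set [0]) = sel (\<lambda>q. odd (cnt [] [0] q)) {0,1,2}" by (rule qmul_sel) simp_all
  then show ?thesis by (simp add: sel_ins sel_empty cnt_def)
qed
lemma tbl3: "qmul r3op {} {1} = {}"
proof -
  have "qmul r3op (set []) (set [1]) = sel (\<lambda>q. odd (cnt [] [1] q)) {0,1,2}" by (rule qmul_sel) simp_all
  then show ?thesis by (simp add: sel_ins sel_empty cnt_def)
qed
lemma tbl4: "qmul r3op {} {2} = {}"
proof -
  have "qmul r3op (set []) (set [2]) = sel (\<lambda>q. odd (cnt [] [2] q)) {0,1,2}" by (rule qmul_sel) simp_all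
  then show ?thesis by (simp add: sel_ins sel_empty cnt_def)
qed
lemma tbl5: "qmul r3op {} {0,1} = {}"
proof -
  have "qmul r3op (set []) (set [0,1]) = sel (\<lambda>q. odd (cnt [] [0,1] q)) {0,1,2}" by (rule qmul_sel) simp_all
  then show ?thesis by (simp add: sel_ins sel_empty cnt_def)
qed
lemma tbl6: "qmul r3op {} {0,2} = {}"
proof -
  have "qmul r3op (set []) (set [0,2]) = sel (\<lambda>q. odd (cnt [] [0,2] q)) {0,1,2}" by (rule qmul_sel) simp_all
  then show ?thesis by (simp add: sel_ins sel_empty cnt_def)
qed
lemma tbl7: "qmul r3op {} {1,2} = {}"
proof -
  have "qmul r3op (set []) (set [1,2]) = sel (\<lambda>q. odd (cnt [] [1,2] q)) {0,1,2}" by (rule qmul_sel) simp_all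
  then show ?thesis by (simp add: sel_ins sel_empty cnt_def)
qed
lemma tbl8: "qmul r3op {} {0,1,2} = {}"
proof -
  have "qmul r3op (set []) (set [0,1,2]) = sel (\<lambda>q. odd (cnt [] [0,1,2] q)) {0,1,2}" by (rule qmul_sel) simp_all
  then show ?thesis by (simp add: sel_ins sel_empty cnt_def)
qed
lemma tbl9: "qmul r3op {0} {} = {}"
proof -
  have "qmul r3op (set [0]) (set []) = sel (\<lambda>q. odd (cnt [0] [] q)) {0,1,2}" by (rule qmul_sel) simp_all
  then show ?thesis by (simp add: sel_ins sel_empty cnt_def)
qed
lemma tbl10: "qmul r3op {0} {0} = {0}"
proof -
  have "qmul r3op (set [0]) (set [0]) = sel (\<lambda>q. odd (cnt [0] [0] q)) {0,1,2}" by (rule qmul_sel) simp_all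
  then show ?thesis by (simp add: sel_ins sel_empty cnt_def)
qed
lemma tbl11: "qmul r3op {0} {1} = {2}"
proof -
  have "qmul r3op (set [0]) (set [1]) = sel (\<lambda>q. odd (cnt [0] [1] q)) {0,1,2}" by (rule qmul_sel) simp_all
  then show ?thesis by (simp add: sel_ins sel_empty cnt_def)
qed
lemma tbl12: "qmul r3op {0} {2} = {1}"
proof -
  have "qmul r3op (set [0]) (set [2]) = sel (\<lambda>q. odd (cnt [0] [2] q)) {0,1,2}" by (rule qmul_sel) simp_all
  then show ?thesis by (simp add: sel_ins sel_empty cnt_def)
qed
lemma tbl13: "qmul r3op {0} {0,1} = {0,2}"
proof -
  have "qmul r3op (set [0]) (set [0,1]) = sel (\<lambda>q. odd (cnt [0] [0,1] q)) {0,1,2}" by (rule qmul_sel) simp_all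
  then show ?thesis by (simp add: sel_ins sel_empty cnt_def)
qed
lemma tbl14: "qmul r3op {0} {0,2} = {0,1}"
proof -
  have "qmul r3op (set [0]) (set [0,2]) = sel (\<lambda>q. odd (cnt [0] [0,2] q)) {0,1,2}" by (rule qmul_sel) simp_all
  then show ?thesis by (simp add: sel_ins sel_empty cnt_def)
qed
lemma tbl15: "qmul r3op {0} {1,2} = {1,2}"
proof -
  have "qmul r3op (set [0]) (set [1,2]) = sel (\<lambda>q. odd (cnt [0] [1,2] q)) {0,1,2}" by (rule qmul_sel) simp_all
  then show ?thesis by (simp add: sel_ins sel_empty cnt_def)
qed
lemma tbl16: "qmul r3op {0} {0,1,2} = {0,1,2}"
proof -
  have "qmul r3op (set [0]) (set [0,1,2]) = sel (\<lambda>q. odd (cnt [0] [0,1,2] q)) {0,1,2}" by (rule qmul_sel) simp_all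
  then show ?thesis by (simp add: sel_ins sel_empty cnt_def)
qed
lemma tbl17: "qmul r3op {1} {} = {}"
proof -
  have "qmul r3op (set [1]) (set []) = sel (\<lambda>q. odd (cnt [1] [] q)) {0,1,2}" by (rule qmul_sel) simp_all
  then show ?thesis by (simp add: sel_ins sel_empty cnt_def)
qed
lemma tbl18: "qmul r3op {1} {0} = {2}"
proof -
  have "qmul r3op (set [1]) (set [0]) = sel (\<lambda>q. odd (cnt [1] [0] q)) {0,1,2}" by (rule qmul_sel) simp_all
  then show ?thesis by (simp add: sel_ins sel_empty cnt_def)
qed
lemma tbl19: "qmul r3op {1} {1} = {1}"
proof -
  have "qmul r3op (set [1]) (set [1]) = sel (\<lambda>q. odd (cnt [1] [1] q)) {0,1,2}" by (rule qmul_sel) simp_all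
  then show ?thesis by (simp add: sel_ins sel_empty cnt_def)
qed
lemma tbl20: "qmul r3op {1} {2} = {0}"
proof -
  have "qmul r3op (set [1]) (set [2]) = sel (\<lambda>q. odd (cnt [1] [2] q)) {0,1,2}" by (rule qmul_sel) simp_all
  then show ?thesis by (simp add: sel_ins sel_empty cnt_def)
qed
lemma tbl21: "qmul r3op {1} {0,1} = {1,2}"
proof -
  have "qmul r3op (set [1]) (set [0,1]) = sel (\<lambda>q. odd (cnt [1] [0,1] q)) {0,1,2}" by (rule qmul_sel) simp_all
  then show ?thesis by (simp add: sel_ins sel_empty cnt_def)
qed
lemma tbl22: "qmul r3op {1} {0,2} = {0,2}"
proof -
  have "qmul r3op (set [1]) (set [0,2]) = sel (\<lambda>q. odd (cnt [1] [0,2] q)) {0,1,2}" by (rule qmul_sel) simp_all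
  then show ?thesis by (simp add: sel_ins sel_empty cnt_def)
qed
lemma tbl23: "qmul r3op {1} {1,2} = {0,1}"
proof -
  have "qmul r3op (set [1]) (set [1,2]) = sel (\<lambda>q. odd (cnt [1] [1,2] q)) {0,1,2}" by (rule qmul_sel) simp_all
  then show ?thesis by (simp add: sel_ins sel_empty cnt_def)
qed
lemma tbl24: "qmul r3op {1} {0,1,2} = {0,1,2}"
proof -
  have "qmul r3op (set [1]) (set [0,1,2]) = sel (\<lambda>q. odd (cnt [1] [0,1,2] q)) {0,1,2}" by (rule qmul_sel) simp_all
  then show ?thesis by (simp add: sel_ins sel_empty cnt_def)
qed
lemma tbl25: "qmul r3op {2} {} = {}"
proof -
  have "qmul r3op (set [2]) (set []) = sel (\<lambda>q. odd (cnt [2] [] q)) {0,1,2}" by (rule qmul_sel) simp_all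
  then show ?thesis by (simp add: sel_ins sel_empty cnt_def)
qed
lemma tbl26: "qmul r3op {2} {0} = {1}"
proof -
  have "qmul r3op (set [2]) (set [0]) = sel (\<lambda>q. odd (cnt [2] [0] q)) {0,1,2}" by (rule qmul_sel) simp_all
  then show ?thesis by (simp add: sel_ins sel_empty cnt_def)
qed
lemma tbl27: "qmul r3op {2} {1} = {0}"
proof -
  have "qmul r3op (set [2]) (set [1]) = sel (\<lambda>q. odd (cnt [2] [1] q)) {0,1,2}" by (rule qmul_sel) simp_all
  then show ?thesis by (simp add: sel_ins sel_empty cnt_def)
qed
lemma tbl28: "qmul r3op {2} {2} = {2}"
proof -
  have "qmul r3op (set [2]) (set [2]) = sel (\<lambda>q. odd (cnt [2] [2] q)) {0,1,2}" by (rule qmul_sel) simp_all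
  then show ?thesis by (simp add: sel_ins sel_empty cnt_def)
qed
lemma tbl29: "qmul r3op {2} {0,1} = {0,1}"
proof -
  have "qmul r3op (set [2]) (set [0,1]) = sel (\<lambda>q. odd (cnt [2] [0,1] q)) {0,1,2}" by (rule qmul_sel) simp_all
  then show ?thesis by (simp add: sel_ins sel_empty cnt_def)
qed
lemma tbl30: "qmul r3op {2} {0,2} = {1,2}"
proof -
  have "qmul r3op (set [2]) (set [0,2]) = sel (\<lambda>q. odd (cnt [2] [0,2] q)) {0,1,2}" by (rule qmul_sel) simp_all
  then show ?thesis by (simp add: sel_ins sel_empty cnt_def)
qed
lemma tbl31: "qmul r3op {2} {1,2} = {0,2}"
proof -
  have "qmul r3op (set [2]) (set [1,2]) = sel (\<lambda>q. odd (cnt [2] [1,2] q)) {0,1,2}" by (rule qmul_sel) simp_all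
  then show ?thesis by (simp add: sel_ins sel_empty cnt_def)
qed
lemma tbl32: "qmul r3op {2} {0,1,2} = {0,1,2}"
proof -
  have "qmul r3op (set [2]) (set [0,1,2]) = sel (\<lambda>q. odd (cnt [2] [0,1,2] q)) {0,1,2}" by (rule qmul_sel) simp_all
  then show ?thesis by (simp add: sel_ins sel_empty cnt_def)
qed
lemma tbl33: "qmul r3op {0,1} {} = {}"
proof -
  have "qmul r3op (set [0,1]) (set []) = sel (\<lambda>q. odd (cnt [0,1] [] q)) {0,1,2}" by (rule qmul_sel) simp_all
  then show ?thesis by (simp add: sel_ins sel_empty cnt_def)
qed
lemma tbl34: "qmul r3op {0,1} {0} = {0,2}"
proof -
  have "qmul r3op (set [0,1]) (set [0]) = sel (\<lambda>q. odd (cnt [0,1] [0] q)) {0,1,2}" by (rule qmul_sel) simp_all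
  then show ?thesis by (simp add: sel_ins sel_empty cnt_def)
qed
lemma tbl35: "qmul r3op {0,1} {1} = {1,2}"
proof -
  have "qmul r3op (set [0,1]) (set [1]) = sel (\<lambda>q. odd (cnt [0,1] [1] q)) {0,1,2}" by (rule qmul_sel) simp_all
  then show ?thesis by (simp add: sel_ins sel_empty cnt_def)
qed
lemma tbl36: "qmul r3op {0,1} {2} = {0,1}"
proof -
  have "qmul r3op (set [0,1]) (set [2]) = sel (\<lambda>q. odd (cnt [0,1] [2] q)) {0,1,2}" by (rule qmul_sel) simp_all
  then show ?thesis by (simp add: sel_ins sel_empty cnt_def)
qed
lemma tbl37: "qmul r3op {0,1} {0,1} = {0,1}"
proof -
  have "qmul r3op (set [0,1]) (set [0,1]) = sel (\<lambda>q. odd (cnt [0,1] [0,1] q)) {0,1,2}" by (rule qmul_sel) simp_all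
  then show ?thesis by (simp add: sel_ins sel_empty cnt_def)
qed
lemma tbl38: "qmul r3op {0,1} {0,2} = {1,2}"
proof -
  have "qmul r3op (set [0,1]) (set [0,2]) = sel (\<lambda>q. odd (cnt [0,1] [0,2] q)) {0,1,2}" by (rule qmul_sel) simp_all
  then show ?thesis by (simp add: sel_ins sel_empty cnt_def)
qed
lemma tbl39: "qmul r3op {0,1} {1,2} = {0,2}"
proof -
  have "qmul r3op (set [0,1]) (set [1,2]) = sel (\<lambda>q. odd (cnt [0,1] [1,2] q)) {0,1,2}" by (rule qmul_sel) simp_all
  then show ?thesis by (simp add: sel_ins sel_empty cnt_def)
qed
lemma tbl40: "qmul r3op {0,1} {0,1,2} = {}"
proof -
  have "qmul r3op (set [0,1]) (set [0,1,2]) = sel (\<lambda>q. odd (cnt [0,1] [0,1,2] q)) {0,1,2}" by (rule qmul_sel) simp_all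
  then show ?thesis by (simp add: sel_ins sel_empty cnt_def)
qed
lemma tbl41: "qmul r3op {0,2} {} = {}"
proof -
  have "qmul r3op (set [0,2]) (set []) = sel (\<lambda>q. odd (cnt [0,2] [] q)) {0,1,2}" by (rule qmul_sel) simp_all
  then show ?thesis by (simp add: sel_ins sel_empty cnt_def)
qed
lemma tbl42: "qmul r3op {0,2} {0} = {0,1}"
proof -
  have "qmul r3op (set [0,2]) (set [0]) = sel (\<lambda>q. odd (cnt [0,2] [0] q)) {0,1,2}" by (rule qmul_sel) simp_all
  then show ?thesis by (simp add: sel_ins sel_empty cnt_def)
qed
lemma tbl43: "qmul r3op {0,2} {1} = {0,2}"
proof -
  have "qmul r3op (set [0,2]) (set [1]) = sel (\<lambda>q. odd (cnt [0,2] [1] q)) {0,1,2}" by (rule qmul_sel) simp_all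
  then show ?thesis by (simp add: sel_ins sel_empty cnt_def)
qed
lemma tbl44: "qmul r3op {0,2} {2} = {1,2}"
proof -
  have "qmul r3op (set [0,2]) (set [2]) = sel (\<lambda>q. odd (cnt [0,2] [2] q)) {0,1,2}" by (rule qmul_sel) simp_all
  then show ?thesis by (simp add: sel_ins sel_empty cnt_def)
qed
lemma tbl45: "qmul r3op {0,2} {0,1} = {1,2}"
proof -
  have "qmul r3op (set [0,2]) (set [0,1]) = sel (\<lambda>q. odd (cnt [0,2] [0,1] q)) {0,1,2}" by (rule qmul_sel) simp_all
  then show ?thesis by (simp add: sel_ins sel_empty cnt_def)
qed
lemma tbl46: "qmul r3op {0,2} {0,2} = {0,2}"
proof -
  have "qmul r3op (set [0,2]) (set [0,2]) = sel (\<lambda>q. odd (cnt [0,2] [0,2] q)) {0,1,2}" by (rule qmul_sel) simp_all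
  then show ?thesis by (simp add: sel_ins sel_empty cnt_def)
qed
lemma tbl47: "qmul r3op {0,2} {1,2} = {0,1}"
proof -
  have "qmul r3op (set [0,2]) (set [1,2]) = sel (\<lambda>q. odd (cnt [0,2] [1,2] q)) {0,1,2}" by (rule qmul_sel) simp_all
  then show ?thesis by (simp add: sel_ins sel_empty cnt_def)
qed
lemma tbl48: "qmul r3op {0,2} {0,1,2} = {}"
proof -
  have "qmul r3op (set [0,2]) (set [0,1,2]) = sel (\<lambda>q. odd (cnt [0,2] [0,1,2] q)) {0,1,2}" by (rule qmul_sel) simp_all
  then show ?thesis by (simp add: sel_ins sel_empty cnt_def)
qed
lemma tbl49: "qmul r3op {1,2} {} = {}"
proof -
  have "qmul r3op (set [1,2]) (set []) = sel (\<lambda>q. odd (cnt [1,2] [] q)) {0,1,2}" by (rule qmul_sel) simp_all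
  then show ?thesis by (simp add: sel_ins sel_empty cnt_def)
qed
lemma tbl50: "qmul r3op {1,2} {0} = {1,2}"
proof -
  have "qmul r3op (set [1,2]) (set [0]) = sel (\<lambda>q. odd (cnt [1,2] [0] q)) {0,1,2}" by (rule qmul_sel) simp_all
  then show ?thesis by (simp add: sel_ins sel_empty cnt_def)
qed
lemma tbl51: "qmul r3op {1,2} {1} = {0,1}"
proof -
  have "qmul r3op (set [1,2]) (set [1]) = sel (\<lambda>q. odd (cnt [1,2] [1] q)) {0,1,2}" by (rule qmul_sel) simp_all
  then show ?thesis by (simp add: sel_ins sel_empty cnt_def)
qed
lemma tbl52: "qmul r3op {1,2} {2} = {0,2}"
proof -
  have "qmul r3op (set [1,2]) (set [2]) = sel (\<lambda>q. odd (cnt [1,2] [2] q)) {0,1,2}" by (rule qmul_sel) simp_all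
  then show ?thesis by (simp add: sel_ins sel_empty cnt_def)
qed
lemma tbl53: "qmul r3op {1,2} {0,1} = {0,2}"
proof -
  have "qmul r3op (set [1,2]) (set [0,1]) = sel (\<lambda>q. odd (cnt [1,2] [0,1] q)) {0,1,2}" by (rule qmul_sel) simp_all
  then show ?thesis by (simp add: sel_ins sel_empty cnt_def)
qed
lemma tbl54: "qmul r3op {1,2} {0,2} = {0,1}"
proof -
  have "qmul r3op (set [1,2]) (set [0,2]) = sel (\<lambda>q. odd (cnt [1,2] [0,2] q)) {0,1,2}" by (rule qmul_sel) simp_all
  then show ?thesis by (simp add: sel_ins sel_empty cnt_def)
qed
lemma tbl55: "qmul r3op {1,2} {1,2} = {1,2}"
proof -
  have "qmul r3op (set [1,2]) (set [1,2]) = sel (\<lambda>q. odd (cnt [1,2] [1,2] q)) {0,1,2}" by (rule qmul_sel) simp_all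
  then show ?thesis by (simp add: sel_ins sel_empty cnt_def)
qed
lemma tbl56: "qmul r3op {1,2} {0,1,2} = {}"
proof -
  have "qmul r3op (set [1,2]) (set [0,1,2]) = sel (\<lambda>q. odd (cnt [1,2] [0,1,2] q)) {0,1,2}" by (rule qmul_sel) simp_all
  then show ?thesis by (simp add: sel_ins sel_empty cnt_def)
qed
lemma tbl57: "qmul r3op {0,1,2} {} = {}"
proof -
  have "qmul r3op (set [0,1,2]) (set []) = sel (\<lambda>q. odd (cnt [0,1,2] [] q)) {0,1,2}" by (rule qmul_sel) simp_all
  then show ?thesis by (simp add: sel_ins sel_empty cnt_def)
qed
lemma tbl58: "qmul r3op {0,1,2} {0} = {0,1,2}"
proof -
  have "qmul r3op (set [0,1,2]) (set [0]) = sel (\<lambda>q. odd (cnt [0,1,2] [0] q)) {0,1,2}" by (rule qmul_sel) simp_all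
  then show ?thesis by (simp add: sel_ins sel_empty cnt_def)
qed
lemma tbl59: "qmul r3op {0,1,2} {1} = {0,1,2}"
proof -
  have "qmul r3op (set [0,1,2]) (set [1]) = sel (\<lambda>q. odd (cnt [0,1,2] [1] q)) {0,1,2}" by (rule qmul_sel) simp_all
  then show ?thesis by (simp add: sel_ins sel_empty cnt_def)
qed
lemma tbl60: "qmul r3op {0,1,2} {2} = {0,1,2}"
proof -
  have "qmul r3op (set [0,1,2]) (set [2]) = sel (\<lambda>q. odd (cnt [0,1,2] [2] q)) {0,1,2}" by (rule qmul_sel) simp_all
  then show ?thesis by (simp add: sel_ins sel_empty cnt_def)
qed
lemma tbl61: "qmul r3op {0,1,2} {0,1} = {}"
proof -
  have "qmul r3op (set [0,1,2]) (set [0,1]) = sel (\<lambda>q. odd (cnt [0,1,2] [0,1] q)) {0,1,2}" by (rule qmul_sel) simp_all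
  then show ?thesis by (simp add: sel_ins sel_empty cnt_def)
qed
lemma tbl62: "qmul r3op {0,1,2} {0,2} = {}"
proof -
  have "qmul r3op (set [0,1,2]) (set [0,2]) = sel (\<lambda>q. odd (cnt [0,1,2] [0,2] q)) {0,1,2}" by (rule qmul_sel) simp_all
  then show ?thesis by (simp add: sel_ins sel_empty cnt_def)
qed
lemma tbl63: "qmul r3op {0,1,2} {1,2} = {}"
proof -
  have "qmul r3op (set [0,1,2]) (set [1,2]) = sel (\<lambda>q. odd (cnt [0,1,2] [1,2] q)) {0,1,2}" by (rule qmul_sel) simp_all
  then show ?thesis by (simp add: sel_ins sel_empty cnt_def)
qed
lemma tbl64: "qmul r3op {0,1,2} {0,1,2} = {0,1,2}"
proof -
  have "qmul r3op (set [0,1,2]) (set [0,1,2]) = sel (\<lambda>q. odd (cnt [0,1,2] [0,1,2] q)) {0,1,2}" by (rule qmul_sel) simp_all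
  then show ?thesis by (simp add: sel_ins sel_empty cnt_def)
qed
lemmas tbl[simp] = tbl1 tbl2 tbl3 tbl4 tbl5 tbl6 tbl7 tbl8 tbl9 tbl10 tbl11 tbl12 tbl13 tbl14 tbl15 tbl16 tbl17 tbl18 tbl19 tbl20 tbl21 tbl22 tbl23 tbl24 tbl25 tbl26 tbl27 tbl28 tbl29 tbl30 tbl31 tbl32 tbl33 tbl34 tbl35 tbl36 tbl37 tbl38 tbl39 tbl40 tbl41 tbl42 tbl43 tbl44 tbl45 tbl46 tbl47 tbl48 tbl49 tbl50 tbl51 tbl52 tbl53 tbl54 tbl55 tbl56 tbl57 tbl58 tbl59 tbl60 tbl61 tbl62 tbl63 tbl64 
lemmas tbl'[simp] = tbl[unfolded One_nat_def]
lemma ex1_ins: "(\<exists>!w. w \<in> insert a A \<and> P w) = ((P a \<and> (\<forall>w\<in>A. P w \<longrightarrow> w = a)) \<or> (\<not>P a \<and> (\<exists>!w. w\<in>A \<and> P w)))"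
  by auto
lemma ex1_empty: "(\<exists>!w. w \<in> {} \<and> P w) = False" by auto
lemma ex1_disj: "(\<exists>!w. (w = a \<or> R w) \<and> P w) = ((P a \<and> (\<forall>w. R w \<and> P w \<longrightarrow> w = a)) \<or> (\<not> P a \<and> (\<exists>!w. R w \<and> P w)))" by auto
lemma neqI: "e \<in> X \<Longrightarrow> e \<notin> Y \<Longrightarrow> X \<noteq> Y" by auto
lemma neqI2: "e \<in> Y \<Longrightarrow> e \<notin> X \<Longrightarrow> X \<noteq> Y" by auto
lemma neq1: "{} \<noteq> ({0}::nat set)" by (rule neqI2[of 0]) simp_all
lemma neq2: "{} \<noteq> ({1}::nat set)" by (rule neqI2[of 1]) simp_all
lemma neq3: "{} \<noteq> ({2}::nat set)" by (rule neqI2[of 2]) simp_all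
lemma neq4: "{} \<noteq> ({0,1}::nat set)" by (rule neqI2[of 0]) simp_all
lemma neq5: "{} \<noteq> ({0,2}::nat set)" by (rule neqI2[of 0]) simp_all
lemma neq6: "{} \<noteq> ({1,2}::nat set)" by (rule neqI2[of 1]) simp_all
lemma neq7: "{} \<noteq> ({0,1,2}::nat set)" by (rule neqI2[of 0]) simp_all
lemma neq8: "{0} \<noteq> ({}::nat set)" by (rule neqI[of 0]) simp_all
lemma neq9: "{0} \<noteq> ({1}::nat set)" by (rule neqI[of 0]) simp_all
lemma neq10: "{0} \<noteq> ({2}::nat set)" by (rule neqI[of 0]) simp_all
lemma neq11: "{0} \<noteq> ({0,1}::nat set)" by (rule neqI2[of 1]) simp_all
lemma neq12: "{0} \<noteq> ({0,2}::nat set)" by (rule neqI2[of 2]) simp_all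
lemma neq13: "{0} \<noteq> ({1,2}::nat set)" by (rule neqI[of 0]) simp_all
lemma neq14: "{0} \<noteq> ({0,1,2}::nat set)" by (rule neqI2[of 1]) simp_all
lemma neq15: "{1} \<noteq> ({}::nat set)" by (rule neqI[of 1]) simp_all
lemma neq16: "{1} \<noteq> ({0}::nat set)" by (rule neqI[of 1]) simp_all
lemma neq17: "{1} \<noteq> ({2}::nat set)" by (rule neqI[of 1]) simp_all
lemma neq18: "{1} \<noteq> ({0,1}::nat set)" by (rule neqI2[of 0]) simp_all
lemma neq19: "{1} \<noteq> ({0,2}::nat set)" by (rule neqI[of 1]) simp_all
lemma neq20: "{1} \<noteq> ({1,2}::nat set)" by (rule neqI2[of 2]) simp_all
lemma neq21: "{1} \<noteq> ({0,1,2}::nat set)" by (rule neqI2[of 0]) simp_all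
lemma neq22: "{2} \<noteq> ({}::nat set)" by (rule neqI[of 2]) simp_all
lemma neq23: "{2} \<noteq> ({0}::nat set)" by (rule neqI[of 2]) simp_all
lemma neq24: "{2} \<noteq> ({1}::nat set)" by (rule neqI[of 2]) simp_all
lemma neq25: "{2} \<noteq> ({0,1}::nat set)" by (rule neqI[of 2]) simp_all
lemma neq26: "{2} \<noteq> ({0,2}::nat set)" by (rule neqI2[of 0]) simp_all
lemma neq27: "{2} \<noteq> ({1,2}::nat set)" by (rule neqI2[of 1]) simp_all
lemma neq28: "{2} \<noteq> ({0,1,2}::nat set)" by (rule neqI2[of 0]) simp_all
lemma neq29: "{0,1} \<noteq> ({}::nat set)" by (rule neqI[of 0]) simp_all
lemma neq30: "{0,1} \<noteq> ({0}::nat set)" by (rule neqI[of 1]) simp_all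
lemma neq31: "{0,1} \<noteq> ({1}::nat set)" by (rule neqI[of 0]) simp_all
lemma neq32: "{0,1} \<noteq> ({2}::nat set)" by (rule neqI[of 0]) simp_all
lemma neq33: "{0,1} \<noteq> ({0,2}::nat set)" by (rule neqI[of 1]) simp_all
lemma neq34: "{0,1} \<noteq> ({1,2}::nat set)" by (rule neqI[of 0]) simp_all
lemma neq35: "{0,1} \<noteq> ({0,1,2}::nat set)" by (rule neqI2[of 2]) simp_all
lemma neq36: "{0,2} \<noteq> ({}::nat set)" by (rule neqI[of 0]) simp_all
lemma neq37: "{0,2} \<noteq> ({0}::nat set)" by (rule neqI[of 2]) simp_all
lemma neq38: "{0,2} \<noteq> ({1}::nat set)" by (rule neqI[of 0]) simp_all
lemma neq39: "{0,2} \<noteq> ({2}::nat set)" by (rule neqI[of 0]) simp_all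
lemma neq40: "{0,2} \<noteq> ({0,1}::nat set)" by (rule neqI[of 2]) simp_all
lemma neq41: "{0,2} \<noteq> ({1,2}::nat set)" by (rule neqI[of 0]) simp_all
lemma neq42: "{0,2} \<noteq> ({0,1,2}::nat set)" by (rule neqI2[of 1]) simp_all
lemma neq43: "{1,2} \<noteq> ({}::nat set)" by (rule neqI[of 1]) simp_all
lemma neq44: "{1,2} \<noteq> ({0}::nat set)" by (rule neqI[of 1]) simp_all
lemma neq45: "{1,2} \<noteq> ({1}::nat set)" by (rule neqI[of 2]) simp_all
lemma neq46: "{1,2} \<noteq> ({2}::nat set)" by (rule neqI[of 1]) simp_all
lemma neq47: "{1,2} \<noteq> ({0,1}::nat set)" by (rule neqI[of 2]) simp_all
lemma neq48: "{1,2} \<noteq> ({0,2}::nat set)" by (rule neqI[of 1]) simp_all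
lemma neq49: "{1,2} \<noteq> ({0,1,2}::nat set)" by (rule neqI2[of 0]) simp_all
lemma neq50: "{0,1,2} \<noteq> ({}::nat set)" by (rule neqI[of 0]) simp_all
lemma neq51: "{0,1,2} \<noteq> ({0}::nat set)" by (rule neqI[of 1]) simp_all
lemma neq52: "{0,1,2} \<noteq> ({1}::nat set)" by (rule neqI[of 0]) simp_all
lemma neq53: "{0,1,2} \<noteq> ({2}::nat set)" by (rule neqI[of 0]) simp_all
lemma neq54: "{0,1,2} \<noteq> ({0,1}::nat set)" by (rule neqI[of 2]) simp_all
lemma neq55: "{0,1,2} \<noteq> ({0,2}::nat set)" by (rule neqI[of 1]) simp_all
lemma neq56: "{0,1,2} \<noteq> ({1,2}::nat set)" by (rule neqI[of 0]) simp_all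
lemmas neqs[simp] = neq1 neq2 neq3 neq4 neq5 neq6 neq7 neq8 neq9 neq10 neq11 neq12 neq13 neq14 neq15 neq16 neq17 neq18 neq19 neq20 neq21 neq22 neq23 neq24 neq25 neq26 neq27 neq28 neq29 neq30 neq31 neq32 neq33 neq34 neq35 neq36 neq37 neq38 neq39 neq40 neq41 neq42 neq43 neq44 neq45 neq46 neq47 neq48 neq49 neq50 neq51 neq52 neq53 neq54 neq55 neq56
lemmas neqs'[simp] = neqs[unfolded One_nat_def]
lemma all_disj: "(\<forall>w. (w = a \<or> R w) \<and> P w \<longrightarrow> Q w) = ((P a \<longrightarrow> Q a) \<and> (\<forall>w. R w \<and> P w \<longrightarrow> Q w))" by auto
lemma all_eq: "(\<forall>w. w = a \<and> P w \<longrightarrow> Q w) = (P a \<longrightarrow> Q a)" by auto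
lemma ex1_eq: "(\<exists>!w. w = a \<and> P w) = P a" by auto

lemma qA: "quandle_in R3 r3op {{0,1,2}}"
  unfolding quandle_in_def is_quandle_def qring_def R3_def
  by (simp add: ex1_disj ex1_eq all_disj all_eq)
lemma qB: "quandle_in R3 r3op {{0},{1},{2}}"
  unfolding quandle_in_def is_quandle_def qring_def R3_def
  by (simp add: ex1_disj ex1_eq all_disj all_eq) 
lemma qC: "quandle_in R3 r3op {{0,1},{0,2},{1,2}}"
  unfolding quandle_in_def is_quandle_def qring_def R3_def
  by (simp add: ex1_disj ex1_eq all_disj all_eq) 
lemma qmul_empty2: "qmul m w {} = {}" unfolding qmul_def by simp

lemma disjBC: "a \<in> {{0},{1},{2}} \<Longrightarrow> a \<in> {{0,1},{0,2},{1::nat,2}} \<Longrightarrow> False"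
  by (elim insertE; simp)
lemma classify:
  assumes "quandle_in R3 r3op X"
  shows "X = {{}} \<or> X = {{0,1,2}} \<or> X \<subseteq> {{0},{1},{2}} \<or> X \<subseteq> {{0,1},{0,2},{1,2}}"
proof -
  have sub: "X \<subseteq> qring R3" using assms unfolding quandle_in_def by simp
  have iq: "is_quandle X (qmul r3op)" using assms unfolding quandle_in_def by simp
  have cl0: "\<forall>u\<in>X. \<forall>v\<in>X. qmul r3op u v \<in> X" using iq unfolding is_quandle_def by (elim conjE)
  have dv0: "\<forall>u\<in>X. \<forall>v\<in>X. \<exists>!w. w \<in> X \<and> u = qmul r3op w v" using iq unfolding is_quandle_def by (elim conjE)
  have cl: "qmul r3op u v \<in> X" if "u\<in>X" "v\<in>X" for u v using bspec[OF bspec[OF cl0 that(1)] that(2)] .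
  have dv: "\<exists>w\<in>X. u = qmul r3op w v" if "u\<in>X" "v\<in>X" for u v
  proof -
    have "\<exists>!w. w \<in> X \<and> u = qmul r3op w v" using bspec[OF bspec[OF dv0 that(1)] that(2)] .
    from ex1_implies_ex[OF this] obtain w where w: "w \<in> X \<and> u = qmul r3op w v" ..
    from w have "w \<in> X" "u = qmul r3op w v" by (rule conjunct1, rule conjunct2)
    then show ?thesis by (rule bexI[rotated])
  qed
  have el: "x = {} \<or> x = {0} \<or> x = {1} \<or> x = {2} \<or> x = {0,1} \<or> x = {0,2} \<or> x = {1,2} \<or> x = {0,1,2}"
    if "x \<in> X" for x
    using sub that unfolding qring_def R3_def by (intro sub3) auto
  show ?thesis
  proof (cases "{} \<in> X")
    case True
    have "u = {}" if u: "u \<in> X" for u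
    proof -
      obtain w where "w \<in> X" "u = qmul r3op w {}" using dv[OF u True] by blast
      then show ?thesis by (simp add: qmul_empty2)
    qed
    with True have "X = {{}}" by auto
    then show ?thesis by simp
  next
    case F: False
    show ?thesis
    proof (cases "{0,1,2} \<in> X")
      case True
      have "y = {0,1,2}" if y: "y \<in> X" for y
      proof -
        have 1: "y \<noteq> {}" using F y by auto
        have 2: "y \<notin> {{0,1},{0,2},{1,2}}"
        proof
          assume "y \<in> {{0,1},{0,2},{1,2}}"
          then have "qmul r3op {0,1,2} y = {}" by auto
          with cl[OF True y] F show False by simp
        qed
        have 3: "y \<notin> {{0},{1},{2}}"
        proof
          assume ys: "y \<in> {{0},{1},{2}}"
          obtain w where w: "w \<in> X" "y = qmul r3op w {0,1,2}" using dv[OF y True] by blast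
          from el[OF w(1)] have "qmul r3op w {0,1,2} \<in> {{},{0,1,2}}" by (elim disjE) simp_all
          with ys w(2) show False by auto
        qed
        from el[OF y] 1 2 3 show ?thesis by auto
      qed
      then have "X \<subseteq> {{0,1,2}}" by blast
      with True have "X = {{0,1,2}}" by blast
      then show ?thesis by simp
    next
      case S: False
      have BC: "x \<in> {{0},{1},{2}} \<or> x \<in> {{0,1},{0,2},{1,2}}" if "x \<in> X" for x
        using el[OF that] F S that by auto
      have no: False if a: "a \<in> X" "a \<in> {{0},{1},{2}}" and p: "p \<in> X" "p \<in> {{0,1},{0,2},{1,2}}" for a p
      proof -
        obtain w where w: "w \<in> X" "a = qmul r3op w p" using dv[OF a(1) p(1)] by blast
        have "qmul r3op w p \<in> {{0,1},{0,2},{1,2}}" using BC[OF w(1)] p(2) by auto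
        with w(2) have "a \<in> {{0,1},{0,2},{1,2}}" by simp
        with a(2) show False by (rule disjBC)
      qed
      show ?thesis
      proof (cases "\<exists>a\<in>X. a \<in> {{0},{1},{2}}")
        case True
        then obtain a where "a \<in> X" "a \<in> {{0},{1},{2}}" by blast
        then have "X \<subseteq> {{0},{1},{2}}" using BC no by blast
        then show ?thesis by simp
      next
        case False
        then have "X \<subseteq> {{0,1},{0,2},{1,2}}" using BC by blast
        then show ?thesis by simp
      qed
    qed
  qed
qed

lemma memsub: "a \<in> Y \<Longrightarrow> Y \<subseteq> Z \<Longrightarrow> a \<notin> Z \<Longrightarrow> False" by blast

lemma maxA: "quandle_in R3 r3op Y \<Longrightarrow> {{0,1,2}} \<subseteq> Y \<Longrightarrow> Y = {{0,1,2}}"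
proof -
  assume q: "quandle_in R3 r3op Y" and s: "{{0,1,2}} \<subseteq> Y"
  have sY: "{0,1,2} \<in> Y" using s by (rule subsetD) simp
  from classify[OF q] show ?thesis
  proof (elim disjE)
    assume "Y = {{}}" with sY show ?thesis by simp
  next
    assume "Y = {{0,1,2}}" then show ?thesis .
  next
    assume h: "Y \<subseteq> {{0},{1},{2}}" show ?thesis by (rule FalseE, rule memsub[OF sY h]) simp
  next
    assume h: "Y \<subseteq> {{0,1},{0,2},{1,2}}" show ?thesis by (rule FalseE, rule memsub[OF sY h]) simp
  qed
qed

lemma maxB: "quandle_in R3 r3op Y \<Longrightarrow> {{0},{1},{2}} \<subseteq> Y \<Longrightarrow> Y = {{0},{1},{2}}"
proof -
  assume q: "quandle_in R3 r3op Y" and s: "{{0},{1},{2}} \<subseteq> Y"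
  have sY: "{0} \<in> Y" using s by (rule subsetD) simp
  from classify[OF q] show ?thesis
  proof (elim disjE)
    assume "Y = {{}}" with sY show ?thesis by simp
  next
    assume "Y = {{0,1,2}}" with sY show ?thesis by simp
  next
    assume h: "Y \<subseteq> {{0},{1},{2}}" show ?thesis using h s by (rule subset_antisym)
  next
    assume h: "Y \<subseteq> {{0,1},{0,2},{1,2}}" show ?thesis by (rule FalseE, rule memsub[OF sY h]) simp
  qed
qed

lemma maxC: "quandle_in R3 r3op Y \<Longrightarrow> {{0,1},{0,2},{1,2}} \<subseteq> Y \<Longrightarrow> Y = {{0,1},{0,2},{1,2}}"
proof -
  assume q: "quandle_in R3 r3op Y" and s: "{{0,1},{0,2},{1,2}} \<subseteq> Y"
  have sY: "{0,1} \<in> Y" using s by (rule subsetD) simp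
  from classify[OF q] show ?thesis
  proof (elim disjE)
    assume "Y = {{}}" with sY show ?thesis by simp
  next
    assume "Y = {{0,1,2}}" with sY show ?thesis by simp
  next
    assume h: "Y \<subseteq> {{0},{1},{2}}" show ?thesis by (rule FalseE, rule memsub[OF sY h]) simp
  next
    assume h: "Y \<subseteq> {{0,1},{0,2},{1,2}}" show ?thesis using h s by (rule subset_antisym)
  qed
qed

definition fiso :: "nat set \<Rightarrow> nat" where "fiso x = (if x = {1,2} then 0 else if x = {0,2} then 1 else 2)"
lemma fv: "fiso {0,1} = 2" "fiso {0,2} = 1" "fiso {1,2} = 0" by (simp_all add: fiso_def)
lemmas fv' = fv[unfolded One_nat_def]

theorem theorem5p5:
  shows "mq R3 r3op = {{{0, 1, 2}}, {{0}, {1}, {2}}, {{0, 1}, {0, 2}, {1, 2}}}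
         \<and> quandle_iso {{0, 1}, {0, 2}, {1, 2}} (qmul r3op) R3 r3op"
proof
  show "mq R3 r3op = {{{0, 1, 2}}, {{0}, {1}, {2}}, {{0, 1}, {0, 2}, {1, 2}}}"
  proof (rule set_eqI)
    fix X
    show "X \<in> mq R3 r3op \<longleftrightarrow> X \<in> {{{0, 1, 2}}, {{0}, {1}, {2}}, {{0, 1}, {0, 2}, {1, 2}}}"
    proof
      assume "X \<in> mq R3 r3op"
      then have q: "quandle_in R3 r3op X" and nz: "X \<noteq> {{}}"
        and mx: "\<And>Y. quandle_in R3 r3op Y \<and> X \<subseteq> Y \<longrightarrow> Y = X"
        unfolding mq_def by blast+
      from classify[OF q] show "X \<in> {{{0, 1, 2}}, {{0}, {1}, {2}}, {{0, 1}, {0, 2}, {1, 2}}}"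
      proof (elim disjE)
        assume "X = {{}}" with nz show ?thesis by (rule notE)
      next
        assume "X = {{0,1,2}}" then show ?thesis by simp
      next
        assume h: "X \<subseteq> {{0},{1},{2}}"
        have "{{0},{1},{2}} = X" using mx[of "{{0},{1},{2}}"] qB h by blast
        then show ?thesis by simp
      next
        assume h: "X \<subseteq> {{0,1},{0,2},{1,2}}"
        have "{{0,1},{0,2},{1,2}} = X" using mx[of "{{0,1},{0,2},{1,2}}"] qC h by blast
        then show ?thesis by simp
      qed
    next
      assume "X \<in> {{{0, 1, 2}}, {{0}, {1}, {2}}, {{0, 1}, {0, 2}, {1, 2}}}"
      then show "X \<in> mq R3 r3op"
      proof (elim insertE)
        assume 1: "X = {{0,1,2}}"
        show ?thesis unfolding mq_def 1
        proof (intro CollectI conjI allI impI)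
          show "quandle_in R3 r3op {{0,1,2}}" by (rule qA)
          show "{{0,1,2}} \<noteq> {{}}" by simp
          fix Y assume "quandle_in R3 r3op Y \<and> {{0,1,2}} \<subseteq> Y"
          then show "Y = {{0,1,2}}" by (elim conjE) (rule maxA)
        qed
      next
        assume 1: "X = {{0},{1},{2}}"
        show ?thesis unfolding mq_def 1
        proof (intro CollectI conjI allI impI)
          show "quandle_in R3 r3op {{0},{1},{2}}" by (rule qB)
          show "{{0},{1},{2}} \<noteq> {{}}" by simp
          fix Y assume "quandle_in R3 r3op Y \<and> {{0},{1},{2}} \<subseteq> Y"
          then show "Y = {{0},{1},{2}}" by (elim conjE) (rule maxB)
        qed
      next
        assume 1: "X = {{0,1},{0,2},{1,2}}"
        show ?thesis unfolding mq_def 1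
        proof (intro CollectI conjI allI impI)
          show "quandle_in R3 r3op {{0,1},{0,2},{1,2}}" by (rule qC)
          show "{{0,1},{0,2},{1,2}} \<noteq> {{}}" by simp
          fix Y assume "quandle_in R3 r3op Y \<and> {{0,1},{0,2},{1,2}} \<subseteq> Y"
          then show "Y = {{0,1},{0,2},{1,2}}" by (elim conjE) (rule maxC)
        qed
      next
        assume "X \<in> {}" then show ?thesis by simp
      qed
    qed
  qed
next
  have "inj_on fiso {{0, 1}, {0, 2}, {1, 2}}"
    unfolding inj_on_def by (simp add: fv fv')
  moreover have "fiso ` {{0, 1}, {0, 2}, {1, 2}} = R3"
    unfolding R3_def by (auto simp: fv fv')
  moreover have "\<forall>u\<in>{{0, 1}, {0, 2}, {1, 2}}. \<forall>v\<in>{{0, 1}, {0, 2}, {1, 2}}. fiso (qmul r3op u v) = r3op (fiso u) (fiso v)"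
    by (simp add: fv fv')
  ultimately show "quandle_iso {{0, 1}, {0, 2}, {1, 2}} (qmul r3op) R3 r3op"
    unfolding quandle_iso_def bij_betw_def by blast
qed
end
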